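(* Let $p$ be a prime, let $q$ be a rational number and let $a$ be a positive integer. Then the number of $d \in \{0, \ldots, p-1\}$ such that $$\sum_{i=a}^{a+d} \frac{1}{c_p(i)} \equiv q \pmod p$$ is less than $p^{0.835}$.
   Context: $c_p(1) < c_p(2) < \cdots$ denotes the increasing sequence of all positive integers not divisible by $p$. For rational numbers $x, y$, $x \equiv y \pmod p$ means $\nu_p(x - y) > 0$, where $\nu_p$ is the $p$-adic valuation. *)

theory Defs
  imports Complex_Main "HOL-Library.Infinite_Set" "HOL-Computational_Algebra.Primes"
begin

text \<open>c_p(i), i >= 1: the i-th smallest positive integer not divisible by p
  (enumerate is 0-indexed, hence i - 1).\<close>
definition cp :: "nat \<Rightarrow> nat \<Rightarrow> nat" where
  "cp p i = enumerate {n::nat. 0 < n \<and> \<not> p dvd n} (i - 1)"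

definition padic_val_rat :: "nat \<Rightarrow> rat \<Rightarrow> int" where
  "padic_val_rat p x = (let (a, b) = quotient_of x in
      int (multiplicity (int p) a) - int (multiplicity (int p) b))"

text \<open>x == y (mod p) iff nu_p(x - y) > 0 (with nu_p(0) = +infinity).\<close>
definition rat_cong_p :: "rat \<Rightarrow> rat \<Rightarrow> nat \<Rightarrow> bool" where
  "rat_cong_p x y p \<longleftrightarrow> x = y \<or> padic_val_rat p (x - y) > 0"

end

theory Submission
  imports Defs "HOL-Computational_Algebra.Polynomial"
begin


lemma inS_aux: fixes p m n :: nat assumes m1: "m \<ge> 1" and pm: "p = m + 1"
  shows "Suc n + n div m \<in> {n::nat. 0 < n \<and> \<not> p dvd n}"
  proof -
    define k where "k = n div m"
    define r where "r = n mod m"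
    have n: "n = k*m + r" unfolding k_def r_def by simp
    have r: "r < m" unfolding r_def using m1 by simp
    have d: "n div m = k" by (simp add: k_def)
    have e: "Suc n + n div m = k*p + (r+1)" using n d pm by (simp add: algebra_simps)
    have "\<not> p dvd k*p + (r+1)"
    proof
      assume h: "p dvd k*p + (r+1)"
      have "p dvd (k*p + (r+1)) - k*p" by (rule dvd_diff_nat[OF h]) simp
      hence "p dvd r+1" by simp
      moreover have "0 < r+1" "r+1 < p" using r pm by auto
      ultimately show False using nat_dvd_not_less[of "r+1" p] by simp
    qed
    thus ?thesis using e by simp
  qed

lemma cp_enum:
  fixes p :: nat assumes p2: "p \<ge> 2"
  shows "enumerate {n::nat. 0 < n \<and> \<not> p dvd n} n = Suc n + n div (p-1)"
proof -
  let ?S = "{n::nat. 0 < n \<and> \<not> p dvd n}"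
  define m where "m = p - 1"
  have m1: "m \<ge> 1" and pm: "p = m + 1" using p2 by (auto simp: m_def)
  have inS: "Suc n + n div m \<in> ?S" for n using inS_aux[OF m1 pm] .
  have inf: "infinite ?S"
  proof -
    have "inj (\<lambda>n. Suc n + n div m)" by (intro injI) (metis add_le_mono div_le_mono le_antisym nat_le_linear add_Suc not_less_eq_eq Suc_le_mono le_add1 less_irrefl add_less_le_mono le_neq_implies_less)
    moreover have "range (\<lambda>n. Suc n + n div m) \<subseteq> ?S" using inS by auto
    ultimately show ?thesis using infinite_iff_countable_subset by (meson infinite_UNIV_nat range_inj_infinite infinite_super)
  qed
  show ?thesis
  proof (induction n)
    case 0
    have "enumerate ?S 0 = (LEAST n. n \<in> ?S)" by (simp add: enumerate_0)
    also have "\<dots> = 1" by (rule Least_equality) (use p2 in auto)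
    finally show ?case by simp
  next
    case (Suc n)
    have "enumerate ?S (Suc n) = (LEAST s. s \<in> ?S \<and> enumerate ?S n < s)"
      using enumerate_Suc''[OF inf] .
    also have "\<dots> = Suc (Suc n) + Suc n div m"
    proof (rule Least_equality)
      show "Suc (Suc n) + Suc n div m \<in> ?S \<and> enumerate ?S n < Suc (Suc n) + Suc n div m"
        proof -
        have "n div (p-1) \<le> Suc n div (p-1)" by (rule div_le_mono) simp
        hence "n div (p-1) < Suc (Suc n div (p-1))" by linarith
        thus ?thesis using inS[of "Suc n"] Suc by (simp add: m_def)
      qed
    next
      fix y assume y: "y \<in> ?S \<and> enumerate ?S n < y"
      show "Suc (Suc n) + Suc n div m \<le> y"
      proof (rule ccontr)
        assume nt: "\<not> ?thesis"
        define k where "k = n div m"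
        define r where "r = n mod m"
        have n: "n = k*m + r" unfolding k_def r_def by simp
        have r: "r < m" unfolding r_def using m1 by simp
        have d: "n div m = k" by (simp add: k_def)
        have en: "enumerate ?S n = Suc n + k" using Suc d by (simp add: m_def)
        have yl: "y < Suc (Suc n) + Suc n div m" using nt by simp
        have yg: "Suc n + k < y" using y en by simp
        show False
        proof (cases "Suc r < m")
          case True
          have "Suc n = k*m + Suc r" using n by simp
          hence "Suc n div m = (Suc r + k*m) div m" by (simp add: add.commute)
          also have "\<dots> = k + Suc r div m" using m1 div_mult_self1[of m "Suc r" k] by simp
          also have "\<dots> = k" using True by (simp del: div_mult_self1)
          finally have "Suc n div m = k" .
          then show False using yl yg by linarith
        next
          case False
          hence rr: "Suc r = m" using r by simp
          have "Suc n = (k+1)*m" using n rr by simp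
          hence "Suc n div m = k+1" using m1 by simp
          hence "y = Suc n + k + 1" using yl yg by linarith
          also have "\<dots> = (k+1)*p" using n rr pm by (simp add: algebra_simps)
          finally have "p dvd y" by simp
          then show False using y by auto
        qed
      qed
    qed
    finally show ?case using m_def by simp
  qed
qed



lemma cp_eq: assumes "p \<ge> 2" "i \<ge> 1" shows "cp p i = i + (i-1) div (p-1)"
  using cp_enum[OF assms(1), of "i-1"] assms by (simp add: cp_def)

lemma cp_in: assumes "p \<ge> 2" shows "0 < cp p i \<and> \<not> p dvd cp p i"
proof -
  have "cp p i = Suc (i-1) + (i-1) div (p-1)" using cp_enum[OF assms, of "i-1"] by (simp add: cp_def)
  moreover have "Suc (i-1) + (i-1) div (p-1) \<in> {n::nat. 0 < n \<and> \<not> p dvd n}"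
    by (rule inS_aux) (use assms in auto)
  ultimately show ?thesis by simp
qed

definition pint0 :: "nat \<Rightarrow> rat \<Rightarrow> bool" where
  "pint0 p x \<longleftrightarrow> (\<exists>u w::int. w \<noteq> 0 \<and> \<not> int p dvd w \<and> int p dvd u \<and> x = of_int u / of_int w)"

lemma cong_pint0: assumes "prime p" "rat_cong_p x y p" shows "pint0 p (x - y)"
proof (cases "x = y")
  case True
  then show ?thesis unfolding pint0_def using assms(1)
    by (intro exI[of _ 0] exI[of _ 1]) (auto simp: prime_gt_1_nat)
next
  case False
  obtain a b where qa: "quotient_of (x - y) = (a, b)" by (cases "quotient_of (x - y)") auto
  have b: "b > 0" using quotient_of_denom_pos[OF qa] .
  have cop: "coprime a b" using quotient_of_coprime[OF qa] .
  have xy: "x - y = of_int a / of_int b" using quotient_of_div[OF qa] .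
  have "padic_val_rat p (x - y) > 0" using assms(2) False by (simp add: rat_cong_p_def)
  hence "multiplicity (int p) a > multiplicity (int p) b" by (simp add: padic_val_rat_def qa)
  hence "1 \<le> multiplicity (int p) a" by simp
  hence pa: "int p dvd a" using multiplicity_dvd'[of 1 "int p" a] by simp
  have pb: "\<not> int p dvd b"
  proof
    assume "int p dvd b"
    with pa cop have "is_unit (int p)" by (meson coprime_common_divisor)
    thus False using assms(1) by (simp add: prime_gt_1_nat)
  qed
  show ?thesis unfolding pint0_def using b pa pb xy by (intro exI[of _ a] exI[of _ b]) auto
qed

lemma pint0_diff: assumes "prime p" "pint0 p x" "pint0 p y" shows "pint0 p (x - y)"
proof -
  obtain u w where 1: "w \<noteq> 0" "\<not> int p dvd w" "int p dvd u" "x = of_int u / of_int w"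
    using assms(2) unfolding pint0_def by blast
  obtain u' w' where 2: "w' \<noteq> 0" "\<not> int p dvd w'" "int p dvd u'" "y = of_int u' / of_int w'"
    using assms(3) unfolding pint0_def by blast
  have pr: "prime (int p)" using assms(1) by simp
  have "x - y = of_int (u*w' - u'*w) / of_int (w*w')" using 1(1) 2(1) unfolding 1(4) 2(4) by (simp add: field_simps)
  moreover have "\<not> int p dvd w*w'" using 1 2 pr by (simp add: prime_dvd_mult_iff)
  moreover have "int p dvd u*w' - u'*w" using 1 2 by simp
  ultimately show ?thesis unfolding pint0_def using 1 2 by (intro exI[of _ "u*w' - u'*w"] exI[of _ "w*w'"]) auto
qed

lemma pint0_frac: assumes "prime p" "pint0 p (of_int P / of_int Q)" "Q \<noteq> 0" "\<not> int p dvd Q"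
  shows "int p dvd P"
proof -
  obtain u w where 1: "w \<noteq> 0" "\<not> int p dvd w" "int p dvd u" "of_int P / of_int Q = (of_int u / of_int w :: rat)"
    using assms(2) unfolding pint0_def by blast
  have pr: "prime (int p)" using assms(1) by simp
  have "of_int (P * w) = (of_int (u * Q) :: rat)" using 1 assms(3) by (simp add: field_simps)
  hence e: "P * w = u * Q" by (simp only: of_int_eq_iff)
  have "int p dvd P * w" unfolding e using 1 by simp
  thus ?thesis using pr 1 by (simp add: prime_dvd_mult_iff)
qed



lemma roots_modp:
  fixes f :: "int poly" and p :: int
  assumes pr: "prime p"
  shows "\<not> (\<exists>h. f = smult p h) \<Longrightarrow> finite X \<Longrightarrow> (\<forall>x\<in>X. \<forall>y\<in>X. x \<noteq> y \<longrightarrow> \<not> p dvd (x - y))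
    \<Longrightarrow> (\<forall>x\<in>X. p dvd poly f x) \<Longrightarrow> card X \<le> degree f"
proof (induction "degree f" arbitrary: f X)
  case 0
  show ?case
  proof (cases "X = {}")
    case True then show ?thesis by simp
  next
    case False
    then obtain r where r: "r \<in> X" by blast
    obtain c where fc: "f = [:c:]" using degree0_coeffs[of f] 0(1) by auto
    have "p dvd c" using 0(5) r fc by auto
    then obtain k where "c = p * k" by blast
    hence "f = smult p [:k:]" using fc by simp
    thus ?thesis using 0(2) by blast
  qed
next
  case (Suc n)
  show ?case
  proof (cases "X = {}")
    case True then show ?thesis by simp
  next
    case False
    then obtain r where r: "r \<in> X" by blast
    define g where "g = synthetic_div f r"
    have fg: "[:-r, 1:] * g + [:poly f r:] = f" unfolding g_def by (rule synthetic_div_correct')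
    have dg: "degree g = n" unfolding g_def using Suc(2) degree_synthetic_div[of f r] by simp
    have pfr: "p dvd poly f r" using Suc(6) r by blast
    then obtain k where k: "poly f r = p * k" by blast
    have gns: "\<not> (\<exists>h. g = smult p h)"
    proof
      assume "\<exists>h. g = smult p h"
      then obtain h where gh: "g = smult p h" by blast
      have "f = [:-r, 1:] * g + [:poly f r:]" using fg by simp
      also have "\<dots> = smult p ([:-r, 1:] * h + [:k:])" unfolding gh k
        by (simp only: smult_add_right mult_smult_right smult_pCons smult_0_right)
      finally have "f = smult p ([:-r, 1:] * h + [:k:])" .
      thus False using Suc(3) by blast
    qed
    have roots: "\<forall>x\<in>X - {r}. p dvd poly g x"
    proof
      fix x assume x: "x \<in> X - {r}"
      have "poly f x = (x - r) * poly g x + poly f r" using arg_cong[OF fg, of "\<lambda>q. poly q x"] by (simp add: algebra_simps)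
      hence "p dvd (x - r) * poly g x" using Suc(6) x pfr by (metis DiffD1 dvd_add_right_iff add.commute)
      moreover have "\<not> p dvd (x - r)" using Suc(5) x r by blast
      ultimately show "p dvd poly g x" using pr by (simp add: prime_dvd_mult_iff)
    qed
    have "card (X - {r}) \<le> degree g"
      using Suc(1)[OF dg[symmetric] gns _ _ roots] Suc(4,5) by blast
    hence "card X \<le> Suc n" using dg r Suc(4) by (simp add: card_Diff_singleton)
    thus ?thesis using Suc(2) by simp
  qed
qed

definition Qp :: "nat \<Rightarrow> int poly" where "Qp j = (\<Prod>t\<in>{1..j}. [:int t, 1:])"
definition Pp :: "nat \<Rightarrow> int poly" where "Pp j = pderiv (Qp j)"

lemma Qp_deg: "degree (Qp j) = j" unfolding Qp_def
  by (subst degree_prod_sum_eq) auto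

lemma Qp_lead: "coeff (Qp j) j = 1"
  using lead_coeff_prod[of "\<lambda>t. [:int t, 1:]" "{1..j}"] Qp_deg[of j] unfolding Qp_def by simp

lemma Pp_deg: "degree (Pp j) = j - 1" unfolding Pp_def using Qp_deg[of j] degree_pderiv[of "Qp j"] by simp

lemma Pp_coeff: "j \<ge> 1 \<Longrightarrow> coeff (Pp j) (j - 1) = int j" unfolding Pp_def
  using coeff_pderiv[of "Qp j" "j-1"] Qp_lead[of j] by simp

lemma Pp_poly: "poly (Pp j) c = (\<Sum>s\<in>{1..j}. \<Prod>t\<in>{1..j} - {s}. (c + int t))"
proof -
  have "Pp j = (\<Sum>s\<in>{1..j}. (\<Prod>t\<in>{1..j} - {s}. [:int t, 1:]) * pderiv [:int s, 1:])"
    unfolding Pp_def Qp_def by (rule pderiv_prod)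
  also have "\<dots> = (\<Sum>s\<in>{1..j}. (\<Prod>t\<in>{1..j} - {s}. [:int t, 1:]))" by (simp add: pderiv_pCons)
  finally show ?thesis by (simp add: poly_sum poly_prod add.commute)
qed

lemma Pp_rat: assumes "\<forall>t\<in>{1..j}. c + int t \<noteq> 0"
  shows "(of_int (poly (Pp j) c) :: rat) = (\<Sum>s\<in>{1..j}. 1 / (of_int c + of_nat s)) * of_int (\<Prod>t\<in>{1..j}. (c + int t))"
proof -
  have "(of_int (poly (Pp j) c) :: rat) = (\<Sum>s\<in>{1..j}. \<Prod>t\<in>{1..j} - {s}. (of_int c + of_nat t))"
    unfolding Pp_poly by simp
  also have "\<dots> = (\<Sum>s\<in>{1..j}. 1 / (of_int c + of_nat s) * (\<Prod>t\<in>{1..j}. (of_int c + of_nat t)))"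
  proof (rule sum.cong[OF refl])
    fix s assume s: "s \<in> {1..j}"
    have ne: "(of_int c + of_nat s :: rat) \<noteq> 0"
    proof
      assume "(of_int c + of_nat s :: rat) = 0"
      hence "(of_int (c + int s) :: rat) = 0" by simp
      hence "c + int s = 0" by (simp only: of_int_eq_0_iff)
      thus False using assms s by blast
    qed
    have "(\<Prod>t\<in>{1..j}. (of_int c + of_nat t :: rat)) = (of_int c + of_nat s) * (\<Prod>t\<in>{1..j} - {s}. (of_int c + of_nat t))"
      using s by (simp add: prod.remove)
    thus "(\<Prod>t\<in>{1..j} - {s}. (of_int c + of_nat t :: rat)) = 1 / (of_int c + of_nat s) * (\<Prod>t\<in>{1..j}. (of_int c + of_nat t))"
      using ne by simp
  qed
  also have "\<dots> = (\<Sum>s\<in>{1..j}. 1 / (of_int c + of_nat s)) * of_int (\<Prod>t\<in>{1..j}. (c + int t))"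
    by (simp add: sum_distrib_right)
  finally show ?thesis .
qed



lemma comb:
  fixes A :: "nat set" and T L lo :: nat
  assumes Asub: "A \<subseteq> {lo..<lo+L}" and T1: "T \<ge> 1"
    and pairs: "\<forall>j\<in>{1..<T}. card {x\<in>A. x+j \<in> A} \<le> j - 1"
  shows "T * card A \<le> L + T - 1 + T * (\<Sum>j\<in>{1..<T}. j - 1)"
proof -
  have finA: "finite A" using Asub finite_subset by blast
  define E where "E = {x\<in>A. \<forall>j\<in>{1..<T}. x+j \<notin> A}"
  have EA: "E \<subseteq> A" unfolding E_def by blast
  have "A - E \<subseteq> (\<Union>j\<in>{1..<T}. {x\<in>A. x+j \<in> A})" unfolding E_def by blast
  hence "card (A - E) \<le> card (\<Union>j\<in>{1..<T}. {x\<in>A. x+j \<in> A})"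
    by (intro card_mono) (use finA in auto)
  also have "\<dots> \<le> (\<Sum>j\<in>{1..<T}. card {x\<in>A. x+j \<in> A})" by (rule card_UN_le) simp
  also have "\<dots> \<le> (\<Sum>j\<in>{1..<T}. j - 1)" by (rule sum_mono) (use pairs in auto)
  finally have c1: "card (A - E) \<le> (\<Sum>j\<in>{1..<T}. j - 1)" .
  have cA: "card A = card E + card (A - E)"
    using card_Diff_subset[OF finite_subset[OF EA finA] EA] card_mono[OF finA EA] by simp
  have "card E * T \<le> L + T - 1"
  proof (cases "E = {}")
    case True then show ?thesis by simp
  next
    case False
    then obtain x0 where "x0 \<in> E" by blast
    hence L1: "L \<ge> 1" using EA Asub by force
    have key: "x = y \<and> i = i'" if xE: "x \<in> E" and i: "i < T" and yE: "y \<in> E" and i': "i' < T" and eq: "x + i = y + i'" for x i y i'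
    proof (cases x y rule: linorder_cases)
      case less
      hence "y = x + (i - i')" "i - i' \<in> {1..<T}" using eq i by auto
      thus ?thesis using xE yE unfolding E_def by auto
    next
      case greater
      hence "x = y + (i' - i)" "i' - i \<in> {1..<T}" using eq i' by auto
      thus ?thesis using xE yE unfolding E_def by auto
    next
      case equal then show ?thesis using eq by simp
    qed
    have inj: "inj_on (\<lambda>(x, i). x + i) (E \<times> {..<T})"
      unfolding inj_on_def using key by auto
    have img: "(\<lambda>(x, i). x + i) ` (E \<times> {..<T}) \<subseteq> {lo..<lo + L + T - 1}"
    proof
      fix z assume "z \<in> (\<lambda>(x, i). x + i) ` (E \<times> {..<T})"
      then obtain x i where "x \<in> E" "i < T" "z = x + i" by auto
      moreover hence "x \<in> {lo..<lo+L}" using EA Asub by auto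
      ultimately show "z \<in> {lo..<lo + L + T - 1}" by auto
    qed
    have "card (E \<times> {..<T}) \<le> card {lo..<lo + L + T - 1}"
      by (rule card_inj_on_le[OF inj img]) simp
    thus ?thesis by (simp add: card_cartesian_product)
  qed
  hence "T * card E \<le> L + T - 1" by (simp add: mult.commute)
  hence "T * card A \<le> L + T - 1 + T * card (A - E)" unfolding cA by (simp add: algebra_simps)
  also have "\<dots> \<le> L + T - 1 + T * (\<Sum>j\<in>{1..<T}. j - 1)" using c1 by simp
  finally show ?thesis .
qed

lemma sumC: fixes T :: nat shows "2 * (\<Sum>j\<in>{1..<T}. j - 1) = (T - 1) * (T - 2)"
proof (induction T)
  case 0 then show ?case by simp
next
  case (Suc T)
  show ?case
  proof (cases "T = 0")
    case True then show ?thesis by simp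
  next
    case False
    have "{1..<Suc T} = insert T {1..<T}" using False by auto
    hence "(\<Sum>j\<in>{1..<Suc T}. j - 1) = (T - 1) + (\<Sum>j\<in>{1..<T}. j - 1)" by simp
    hence "2 * (\<Sum>j\<in>{1..<Suc T}. j - 1) = 2 * (T - 1) + (T - 1) * (T - 2)" using Suc.IH by simp
    also have "\<dots> = (Suc T - 1) * (Suc T - 2)" using False by (cases T) (auto simp: algebra_simps)
    finally show ?thesis .
  qed
qed



lemma small_tab: "N < 16 \<Longrightarrow> (N::nat)^6 < (max (2*N-1) (max (3*N-10) 2))^5"
proof -
  assume "N < 16"
  hence "N = 0 \<or> N = 1 \<or> N = 2 \<or> N = 3 \<or> N = 4 \<or> N = 5 \<or> N = 6 \<or> N = 7 \<or> N = 8 \<or> N = 9 \<or> N = 10 \<or> N = 11 \<or> N = 12 \<or> N = 13 \<or> N = 14 \<or> N = 15" by arith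
  thus ?thesis by (elim disjE) (simp_all add: numeral_2_eq_2[symmetric])
qed

lemma big_aux: fixes s :: nat assumes "s \<ge> 4" shows "32 * (4 + 2 * (s * (s - 1))) \<le> s^5"
proof -
  have "64 \<le> s^3" using power_mono[OF assms, of 3] by simp
  hence "64 * s^2 \<le> s^3 * s^2" by (rule mult_right_mono) simp
  also have "\<dots> = s^5" by (simp add: power_add[symmetric])
  finally have a: "64 * s^2 \<le> s^5" .
  have "32 * (4 + 2 * (s * (s - 1))) \<le> 64 * s^2"
  proof -
    have "s * (s - 1) + 2 \<le> s * s" using assms by (cases s) (auto simp: algebra_simps)
    thus ?thesis by (simp add: power2_eq_square)
  qed
  with a show ?thesis by linarith
qed

lemma final_num:
  fixes N p :: nat
  assumes p2: "p \<ge> 2" and F1: "2*N \<le> p + 1"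
    and F2: "\<And>T. T \<ge> 1 \<Longrightarrow> T*N + 2 \<le> p + 2*T + T*((T-1)*(T-2))"
  shows "N^6 < p^5"
proof (cases "N < 16")
  case True
  have "3*N + 2 \<le> p + 12" using F2[of 3] by simp
  hence "max (2*N-1) (max (3*N-10) 2) \<le> p" using F1 p2 by auto
  hence "(max (2*N-1) (max (3*N-10) 2))^5 \<le> p^5" by (rule power_mono) simp
  with small_tab[OF True] show ?thesis by linarith
next
  case False
  show ?thesis
  proof (rule ccontr)
    assume "\<not> ?thesis"
    hence pN: "p^5 \<le> N^6" by simp
    define T where "T = (LEAST T. 32*N \<le> T^5)"
    have ex: "32*N \<le> (32*N)^5" using False by (intro self_le_power) auto
    have T5: "32*N \<le> T^5" unfolding T_def using LeastI[of "\<lambda>T. 32*N \<le> T^5", OF ex] .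
    have T1: "T \<ge> 1" using T5 False by (cases T) auto
    have Tm: "(T-1)^5 < 32*N"
    proof -
      have "\<not> 32*N \<le> (T-1)^5" unfolding T_def by (rule not_less_Least) (use T1 T_def in simp)
      thus ?thesis by simp
    qed
    have "(2*p)^5 = 32 * p^5" by (simp add: power_mult_distrib)
    also have "\<dots> \<le> 32 * N^6" using pN by simp
    also have "\<dots> = 32*N * N^5" using power_Suc[of N 5] by simp
    also have "\<dots> \<le> T^5 * N^5" using T5 by (rule mult_right_mono) simp
    also have "\<dots> = (T*N)^5" by (simp add: power_mult_distrib)
    finally have h5: "(2*p)^5 \<le> (T*N)^5" .
    have "2*p \<le> T*N" using power_le_imp_le_base[of "2*p" 4 "T*N"] h5 by (simp add: eval_nat_numeral)
    hence "2*(T*N) + 4 \<le> T*N + 4*T + 2*(T*((T-1)*(T-2)))" using F2[OF T1] by linarith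
    hence "T*N < T*(4 + 2*((T-1)*(T-2)))" using T1 by (simp add: algebra_simps)
    hence NT: "N < 4 + 2*((T-1)*(T-2))" by (simp only: mult_less_cancel1)
    define s where "s = T - 1"
    have Ts: "T - 2 = s - 1" unfolding s_def by simp
    have Ns: "N < 4 + 2*(s*(s-1))" using NT unfolding Ts s_def .
    have ss: "s^5 < 32*N" using Tm unfolding s_def .
    show False
    proof (cases "s \<ge> 4")
      case True
      have "32*N < 32*(4 + 2*(s*(s-1)))" using Ns by simp
      hence "s^5 < 32*(4 + 2*(s*(s-1)))" using ss by (rule less_trans[rotated])
      thus False using big_aux[OF True] by simp
    next
      case False
      hence "s*(s-1) \<le> 6" by (cases s; cases "s - 1"; cases "s - 2") auto
      thus False using Ns \<open>\<not> N < 16\<close> by linarith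
    qed
  qed
qed

lemma to_real: fixes N p :: nat assumes "N^6 < p^5" "p \<ge> 1"
  shows "real N < real p powr 0.835"
proof (rule ccontr)
  assume "\<not> ?thesis"
  hence h: "real p powr 0.835 \<le> real N" by simp
  have pp: "real p > 0" using assms(2) by simp
  have "real p ^ 5 = real p powr (real 5)" using powr_realpow[OF pp] by simp
  also have "\<dots> \<le> real p powr (of_nat 6 * 0.835)" by (rule powr_mono) (use assms(2) in auto)
  also have "\<dots> = (real p powr 0.835) ^ 6" using powr_power[of "real p" "0.835" 6] pp by simp
  also have "\<dots> \<le> real N ^ 6" by (rule power_mono[OF h]) simp
  finally have "real (p^5) \<le> real (N^6)" by simp
  thus False using assms(1) by linarith
qed



lemma Sstep: "(\<Sum>i = a..a + (d + j). 1 / of_nat (cp p i) :: rat)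
   = (\<Sum>i = a..a + d. 1 / of_nat (cp p i)) + (\<Sum>s\<in>{1..j}. 1 / of_nat (cp p (a + d + s)))"
proof (induction j)
  case 0 then show ?case by simp
next
  case (Suc j)
  have "(\<Sum>i = a..a + (d + Suc j). 1 / of_nat (cp p i) :: rat) = (\<Sum>i = a..a + (d + j). 1 / of_nat (cp p i)) + 1 / of_nat (cp p (a + d + Suc j))"
    by (simp add: add.assoc)
  also have "\<dots> = (\<Sum>i = a..a + d. 1 / of_nat (cp p i)) + ((\<Sum>s\<in>{1..j}. 1 / of_nat (cp p (a + d + s))) + 1 / of_nat (cp p (a + d + Suc j)))"
    using Suc.IH by simp
  also have "(\<Sum>s\<in>{1..j}. 1 / of_nat (cp p (a + d + s))) + 1 / of_nat (cp p (a + d + Suc j)) = (\<Sum>s\<in>{1..Suc j}. 1 / of_nat (cp p (a + d + s)) :: rat)"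
    by simp
  finally show ?case .
qed

lemma pair_pint0:
  assumes pr: "prime p"
    and c1: "rat_cong_p (\<Sum>i = a..a + d. 1 / of_nat (cp p i)) q p"
    and c2: "rat_cong_p (\<Sum>i = a..a + (d + j). 1 / of_nat (cp p i)) q p"
  shows "pint0 p (\<Sum>s\<in>{1..j}. 1 / of_nat (cp p (a + d + s)))"
proof -
  have "pint0 p (((\<Sum>i = a..a + (d + j). 1 / of_nat (cp p i)) - q) - ((\<Sum>i = a..a + d. 1 / of_nat (cp p i)) - q))"
    by (rule pint0_diff[OF pr cong_pint0[OF pr c2] cong_pint0[OF pr c1]])
  thus ?thesis unfolding Sstep by simp
qed

lemma no_gap1:
  assumes pr: "prime p"
    and c1: "rat_cong_p (\<Sum>i = a..a + d. 1 / of_nat (cp p i)) q p"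
    and c2: "rat_cong_p (\<Sum>i = a..a + (d + 1). 1 / of_nat (cp p i)) q p"
  shows False
proof -
  have p2: "p \<ge> 2" using pr by (simp add: prime_ge_2_nat)
  have "pint0 p (\<Sum>s\<in>{1..1}. 1 / of_nat (cp p (a + d + s)))" by (rule pair_pint0[OF pr c1 c2])
  hence "pint0 p (of_int 1 / of_int (int (cp p (a + d + 1))))" by simp
  moreover have "int (cp p (a + d + 1)) \<noteq> 0" "\<not> int p dvd int (cp p (a + d + 1))"
    using cp_in[OF p2, of "a + d + 1"] by auto
  ultimately have "int p dvd 1" using pint0_frac[OF pr] by blast
  thus False using p2 by simp
qed

lemma part_pairs:
  assumes pr: "prime p"
    and Lp: "L \<le> p - 1"
    and cpK: "\<forall>x\<in>{lo..<lo+L}. cp p (a + x) = a + x + K"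
    and Adef: "A = {d \<in> {lo..<lo+L}. rat_cong_p (\<Sum>i = a..a + d. 1 / of_nat (cp p i)) q p}"
    and j1: "j \<ge> 1"
  shows "card {x\<in>A. x + j \<in> A} \<le> j - 1"
proof -
  have p2: "p \<ge> 2" using pr by (simp add: prime_ge_2_nat)
  define B where "B = {x\<in>A. x + j \<in> A}"
  have finB: "finite B" unfolding B_def Adef by simp
  show ?thesis
  proof (cases "j < p")
    case False
    have "B = {}"
    proof (rule ccontr)
      assume "B \<noteq> {}"
      then obtain x where "x \<in> A" "x + j \<in> A" unfolding B_def by blast
      hence "lo \<le> x" "x + j < lo + L" unfolding Adef by auto
      thus False using False Lp by linarith
    qed
    hence "card B = 0" by simp
    thus ?thesis unfolding B_def by linarith
  next
    case True
    define X where "X = (\<lambda>x. int (a + x + K)) ` B"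
    have injX: "inj_on (\<lambda>x. int (a + x + K)) B" by (rule inj_onI) simp
    have cX: "card X = card B" unfolding X_def by (rule card_image[OF injX])
    have prI: "prime (int p)" using pr by simp
    have nsm: "\<not> (\<exists>h. Pp j = smult (int p) h)"
    proof
      assume "\<exists>h. Pp j = smult (int p) h"
      then obtain h where "Pp j = smult (int p) h" by blast
      hence "coeff (Pp j) (j - 1) = int p * coeff h (j - 1)" by simp
      hence "int j = int p * coeff h (j - 1)" using Pp_coeff[OF j1] by simp
      hence "int p dvd int j" by (rule dvdI)
      hence "p dvd j" by (simp only: int_dvd_int_iff)
      thus False using True j1 by (simp add: nat_dvd_not_less)
    qed
    have pw: "\<forall>x\<in>X. \<forall>y\<in>X. x \<noteq> y \<longrightarrow> \<not> int p dvd (x - y)"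
    proof (intro ballI impI)
      fix x y assume "x \<in> X" "y \<in> X" "x \<noteq> y"
      then obtain u v where u: "u \<in> B" "x = int (a + u + K)" and v: "v \<in> B" "y = int (a + v + K)"
        unfolding X_def by blast
      have "u \<in> {lo..<lo+L}" "v \<in> {lo..<lo+L}" using u(1) v(1) unfolding B_def Adef by auto
      hence bnd: "\<bar>int u - int v\<bar> < int p" using Lp p2 by auto
      have "x - y = int u - int v" using u v by simp
      moreover have "int u - int v \<noteq> 0" using \<open>x \<noteq> y\<close> u v by auto
      ultimately show "\<not> int p dvd (x - y)"
      proof (intro notI)
        assume e: "x - y = int u - int v" and ne: "int u - int v \<noteq> 0" and dv: "int p dvd (x - y)"
        have "int p dvd int u - int v" using dv e by simp
        hence "\<bar>int p\<bar> \<le> \<bar>int u - int v\<bar>" by (rule dvd_imp_le_int[OF ne])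
        thus False using bnd by simp
      qed
    qed
    have rts: "\<forall>x\<in>X. int p dvd poly (Pp j) x"
    proof
      fix y assume "y \<in> X"
      then obtain x where x: "x \<in> B" "y = int (a + x + K)" unfolding X_def by blast
      have xA: "x \<in> A" "x + j \<in> A" using x(1) unfolding B_def by auto
      have xin: "lo \<le> x" "x + j < lo + L" using xA unfolding Adef by auto
      have cgs: "rat_cong_p (\<Sum>i = a..a + x. 1 / of_nat (cp p i)) q p"
                "rat_cong_p (\<Sum>i = a..a + (x + j). 1 / of_nat (cp p i)) q p"
        using xA unfolding Adef by auto
      have pi: "pint0 p (\<Sum>s\<in>{1..j}. 1 / of_nat (cp p (a + x + s)))"
        by (rule pair_pint0[OF pr cgs])
      have cps: "cp p (a + x + s) = a + x + K + s" if "s \<in> {1..j}" for s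
      proof -
        have "x + s \<in> {lo..<lo+L}" using that xin by auto
        hence "cp p (a + (x + s)) = a + (x + s) + K" using cpK by blast
        thus ?thesis by (simp add: algebra_simps)
      qed
      have sumeq: "(\<Sum>s\<in>{1..j}. 1 / of_nat (cp p (a + x + s)) :: rat) = (\<Sum>s\<in>{1..j}. 1 / (of_int y + of_nat s))"
        by (intro sum.cong refl) (simp add: cps x(2))
      define Qv where "Qv = (\<Prod>t\<in>{1..j}. (y + int t))"
      have nz: "\<forall>t\<in>{1..j}. y + int t \<noteq> 0" using x(2) by auto
      have Qnz: "Qv \<noteq> 0" unfolding Qv_def using nz by simp
      have Qnd: "\<not> int p dvd Qv"
      proof
        assume "int p dvd Qv"
        hence "\<exists>t\<in>{1..j}. int p dvd y + int t"
          using prime_dvd_prod_iff[of "{1..j}" "int p" "\<lambda>t. y + int t"] prI unfolding Qv_def by simp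
        then obtain t where t: "t \<in> {1..j}" "int p dvd y + int t" by blast
        have "y + int t = int (cp p (a + x + t))" using cps[OF t(1)] x(2) by simp
        hence "int p dvd int (cp p (a + x + t))" using t(2) by simp
        thus False using cp_in[OF p2, of "a + x + t"] by simp
      qed
      have "(of_int (poly (Pp j) y) :: rat) = (\<Sum>s\<in>{1..j}. 1 / (of_int y + of_nat s)) * of_int Qv"
        unfolding Qv_def by (rule Pp_rat[OF nz])
      hence "(\<Sum>s\<in>{1..j}. 1 / (of_int y + of_nat s)) = (of_int (poly (Pp j) y) / of_int Qv :: rat)"
        using Qnz by (simp add: eq_divide_eq)
      hence "pint0 p (of_int (poly (Pp j) y) / of_int Qv)" using pi sumeq by simp
      thus "int p dvd poly (Pp j) y" by (rule pint0_frac[OF pr _ Qnz Qnd])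
    qed
    have "card X \<le> degree (Pp j)"
      by (rule roots_modp[OF prI nsm _ pw rts]) (simp add: X_def finB)
    thus ?thesis using cX Pp_deg[of j] unfolding B_def by simp
  qed
qed



lemma div_off: fixes m k t :: nat assumes "m > 0" "t < m" shows "(k*m + t) div m = k"
proof -
  have "(t + k*m) div m = k + t div m" using div_mult_self1[of m t k] assms(1) by simp
  thus ?thesis using assms by (simp add: add.commute)
qed

theorem lemma3p4:
  fixes p :: nat and q :: rat and a :: nat
  assumes "prime p" and "a > 0"
  shows "real (card {d \<in> {0..p - 1}.
            rat_cong_p (\<Sum>i = a..a + d. 1 / of_nat (cp p i)) q p})
         < real p powr 0.835"
proof -
  have pr: "prime p" by fact
  have p2: "p \<ge> 2" using pr by (simp add: prime_ge_2_nat)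
  define D where "D = {d \<in> {0..p - 1}. rat_cong_p (\<Sum>i = a..a + d. 1 / of_nat (cp p i)) q p}"
  have Dint: "{0..p-1} = {0..<0+p}" using p2 by auto
  have D': "D = {d \<in> {0..<0+p}. rat_cong_p (\<Sum>i = a..a + d. 1 / of_nat (cp p i)) q p}"
    unfolding D_def Dint ..
  have F1: "2 * card D \<le> p + 1"
  proof -
    have pairs: "\<forall>j\<in>{1..<2::nat}. card {x\<in>D. x+j \<in> D} \<le> j - 1"
    proof
      fix j :: nat assume "j \<in> {1..<2}"
      hence j: "j = 1" by auto
      have e: "{x\<in>D. x+j \<in> D} = {}"
      proof (rule ccontr)
        assume "{x\<in>D. x+j \<in> D} \<noteq> {}"
        then obtain x where "x \<in> D" "x + 1 \<in> D" using j by blast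
        thus False using no_gap1[OF pr] unfolding D_def by blast
      qed
      show "card {x\<in>D. x+j \<in> D} \<le> j - 1" unfolding e by simp
    qed
    have "2 * card D \<le> p + 2 - 1 + 2 * (\<Sum>j\<in>{1..<2::nat}. j - 1)"
      by (rule comb[OF _ _ pairs]) (auto simp: D')
    thus ?thesis by simp
  qed
  define m where "m = p - 1"
  have m1: "m \<ge> 1" and pm: "p = m + 1" using p2 by (auto simp: m_def)
  define r0 where "r0 = (a - 1) mod m"
  define k0 where "k0 = (a - 1) div m"
  define b where "b = m - r0"
  have r0m: "r0 < m" unfolding r0_def using m1 by simp
  have a1: "a - 1 = k0 * m + r0" unfolding k0_def r0_def by simp
  have cpx: "cp p (a + x) = a + x + (a + x - 1) div m" for x
    using cp_eq[OF p2, of "a + x"] assms(2) by (simp add: m_def)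
  have part1: "\<forall>x\<in>{0..<0+b}. cp p (a + x) = a + x + k0"
  proof
    fix x assume "x \<in> {0..<0+b}"
    hence "r0 + x < m" unfolding b_def using r0m by auto
    moreover have eq: "a + x - 1 = k0 * m + (r0 + x)" using a1 assms(2) by simp
    ultimately have "(a + x - 1) div m = k0" unfolding eq using m1 by (intro div_off) auto
    thus "cp p (a + x) = a + x + k0" using cpx by simp
  qed
  have part2: "\<forall>x\<in>{b..<b+(p-b)}. cp p (a + x) = a + x + (k0 + 1)"
  proof
    fix x assume x: "x \<in> {b..<b+(p-b)}"
    have bp: "b \<le> p" unfolding b_def pm by simp
    have "x \<ge> b" "x < p" using x bp by auto
    hence "r0 + x - m < m" "r0 + x \<ge> m" unfolding b_def using r0m pm by auto
    moreover have eq: "a + x - 1 = (k0 + 1) * m + (r0 + x - m)" using a1 assms(2) \<open>r0 + x \<ge> m\<close>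
      by (simp add: algebra_simps)
    ultimately have "(a + x - 1) div m = k0 + 1" unfolding eq using m1 by (intro div_off) auto
    thus "cp p (a + x) = a + x + (k0 + 1)" using cpx by simp
  qed
  have bm: "b \<le> p - 1" unfolding b_def m_def by simp
  have pbm: "p - b \<le> p - 1" unfolding b_def using r0m pm by simp
  have bp: "b \<le> p" unfolding b_def pm by simp
  define A1 where "A1 = {d \<in> {0..<0+b}. rat_cong_p (\<Sum>i = a..a + d. 1 / of_nat (cp p i)) q p}"
  define A2 where "A2 = {d \<in> {b..<b+(p-b)}. rat_cong_p (\<Sum>i = a..a + d. 1 / of_nat (cp p i)) q p}"
  have DA: "D = A1 \<union> A2" unfolding D' A1_def A2_def using bp by auto
  have disj: "A1 \<inter> A2 = {}" unfolding A1_def A2_def by auto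
  have cD: "card D = card A1 + card A2" unfolding DA
    by (rule card_Un_disjoint[OF _ _ disj]) (simp_all add: A1_def A2_def)
  have F2: "T*card D + 2 \<le> p + 2*T + T*((T-1)*(T-2))" if T1: "T \<ge> 1" for T
  proof -
    let ?C = "\<Sum>j\<in>{1..<T}. j - 1"
    have pa1: "\<forall>j\<in>{1..<T}. card {x\<in>A1. x+j \<in> A1} \<le> j - 1"
      using part_pairs[OF pr bm part1 A1_def] by auto
    have pa2: "\<forall>j\<in>{1..<T}. card {x\<in>A2. x+j \<in> A2} \<le> j - 1"
      using part_pairs[OF pr pbm part2 A2_def] by auto
    have c1: "T * card A1 \<le> b + T - 1 + T * ?C"
      by (rule comb[OF _ T1 pa1]) (auto simp: A1_def)
    have c2: "T * card A2 \<le> (p - b) + T - 1 + T * ?C"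
      by (rule comb[OF _ T1 pa2]) (auto simp: A2_def)
    have "T * card D \<le> p + 2*T - 2 + T * (2 * ?C)" using c1 c2 cD bp T1
      by (simp add: algebra_simps)
    thus ?thesis using sumC[of T] T1 by simp
  qed
  have "card D ^ 6 < p ^ 5" by (rule final_num[OF p2 F1 F2])
  hence "real (card D) < real p powr 0.835" by (rule to_real) (use p2 in simp)
  thus ?thesis unfolding D_def .
qed


end
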